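(* Let $\delta'\in(0,1)$, $\rho=(\rho_c,\rho_u,\rho_w)\in(0,\infty)^3$ and $X^{(1)},\dots,X^{(n)}\in\mathcal X$. On the event $\mathcal E_{U,m}(\delta')$, for every $\varphi\in\Omega_\rho$, \[ \sup_{j\in[n]}\big|f(X^{(j)};\varphi)-f_{\mathrm{lin}}(X^{(j)};\varphi)\big|\le\frac1{\sqrt m}\Big(L_{1,m}(\delta')\rho_c\sqrt{\rho_w^2+\rho_u^2}+L_{2,m}(\delta')(\rho_w^2+\rho_u^2)\Big)=:B_{\mathrm{lin},m}(\delta'). \]
   Context: $\mathcal{X}=\{X\in\mathbb{R}^{d\times T}:\max_t\|X_t\|_2\le1\}$ (columns $X_t$); each $X$ has a fixed query $q_X\in\mathbb{R}^d$, $\|q_X\|_2\le1$. Softmax $(\sigma_s(z))_t=e^{z_t}/\sum_se^{z_s}$; $a(X;W)=X\sigma_s(X^\top Wq_X)$; $h(X;\theta)=\sigma(U^\top a(X;W))$, $\theta=(U,\operatorname{vec}(W))$; $f(X;\varphi)=m^{-1/2}\sum_{i=1}^mc_ih(X;\theta_i)$, $\varphi_i=(c_i,U_i,\operatorname{vec}(W_i))$. $\sigma$ twice differentiable with $|\sigma|\le\sigma_0,|\sigma'|\le\sigma_1,|\sigma''|\le\sigma_2$. $m$ even. Symmetric initialization $\varphi^{(0)}$: for $i\le m/2$, independently, $W_i^{(0)}$ with i.i.d. $\mathcal N(0,1)$ entries, $U_i^{(0)}\sim\mathcal N(0,I_d)$, $c_i^{(0)}$ uniform on $\{\pm1\}$;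 $W_{i+m/2}^{(0)}=W_i^{(0)}$, $U_{i+m/2}^{(0)}=U_i^{(0)}$, $c_{i+m/2}^{(0)}=-c_i^{(0)}$. $\Omega_\rho=\{\varphi:|c_i-c_i^{(0)}|\le\rho_c/\sqrt m,\|U_i-U_i^{(0)}\|_2\le\rho_u/\sqrt m,\|W_i-W_i^{(0)}\|_F\le\rho_w/\sqrt m\ \forall i\}$. $f_{\mathrm{lin}}(X;\varphi)=f(X;\varphi^{(0)})+\langle\nabla_\varphi f(X;\varphi^{(0)}),\varphi-\varphi^{(0)}\rangle$. $B_{U,m}(\delta')=\sqrt d+\sqrt{2\log(m/(2\delta'))}+\rho_u/\sqrt m$; $L_{1,m}(\delta')=\sigma_1\sqrt{1+B_{U,m}^2}$; $L_{2,m}(\delta')=\sigma_2(1+B_{U,m}^2)+8\sigma_1\sqrt{1+B_{U,m}^2}$. $\mathcal E_{U,m}(\delta')=\{\max_{i\in[m]}\|U_i^{(0)}\|_2\le\sqrt d+\sqrt{2\log(m/(2\delta'))}\}$. *)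

theory Defs
  imports "HOL-Analysis.Analysis"
begin

text \<open>A data point X in R^{d x T} is represented column-wise: X $ t :: real^'d is the
column X_t.  Parameters of the m-neuron network: (c, U, W) with neuron i < m having
c i :: real, U i :: real^'d, W i :: real^'d^'d.  The norm on real^'d^'d is the
Frobenius norm.\<close>

type_synonym 'd params = "(nat \<Rightarrow> real) \<times> (nat \<Rightarrow> real^'d) \<times> (nat \<Rightarrow> real^'d^'d)"

definition in_dom :: "real^'d^'t \<Rightarrow> bool" where
  "in_dom X = (\<forall>t. norm (X $ t) \<le> 1)"

definition softmax :: "('t::finite \<Rightarrow> real) \<Rightarrow> 't \<Rightarrow> real" where
  "softmax z t = exp (z t) / (\<Sum>s\<in>UNIV. exp (z s))"

text \<open>a(X;W) = X softmax(X^T W q), with (X^T W q)_t = X_t \<bullet> (W q).\<close>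
definition attn :: "real^'d^'t::finite \<Rightarrow> real^'d \<Rightarrow> real^'d^'d \<Rightarrow> real^'d" where
  "attn X q W = (\<Sum>t\<in>UNIV. softmax (\<lambda>s. (X $ s) \<bullet> (W *v q)) t *\<^sub>R (X $ t))"

definition neuron :: "(real \<Rightarrow> real) \<Rightarrow> real^'d^'t::finite \<Rightarrow> real^'d \<Rightarrow> real^'d \<Rightarrow> real^'d^'d \<Rightarrow> real" where
  "neuron \<sigma> X q U W = \<sigma> (U \<bullet> attn X q W)"

definition net :: "(real \<Rightarrow> real) \<Rightarrow> (real^'d^'t::finite \<Rightarrow> real^'d) \<Rightarrow> nat \<Rightarrow> real^'d^'t \<Rightarrow> ('d::finite) params \<Rightarrow> real" where
  "net \<sigma> Q m X \<phi> = (case \<phi> of (c, U, W) \<Rightarrow>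
     (1 / sqrt (real m)) * (\<Sum>i<m. c i * neuron \<sigma> X (Q X) (U i) (W i)))"

definition param_line :: "('d::finite) params \<Rightarrow> ('d::finite) params \<Rightarrow> real \<Rightarrow> 'd params" where
  "param_line \<phi>0 \<phi> s = (case \<phi>0 of (c0, U0, W0) \<Rightarrow> case \<phi> of (c, U, W) \<Rightarrow>
     (\<lambda>i. c0 i + s * (c i - c0 i), \<lambda>i. U0 i + s *\<^sub>R (U i - U0 i), \<lambda>i. W0 i + s *\<^sub>R (W i - W0 i)))"

text \<open>Linearization: f(X;phi0) + <grad f(X;phi0), phi - phi0>, the inner product being
written as the directional derivative of f at phi0 in direction phi - phi0.\<close>
definition net_lin :: "(real \<Rightarrow> real) \<Rightarrow> (real^'d^'t::finite \<Rightarrow> real^'d) \<Rightarrow> nat \<Rightarrow> real^'d^'t \<Rightarrow> ('d::finite) params \<Rightarrow> ('d::finite) params \<Rightarrow> real" where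
  "net_lin \<sigma> Q m X \<phi>0 \<phi> = net \<sigma> Q m X \<phi>0 + deriv (\<lambda>s. net \<sigma> Q m X (param_line \<phi>0 \<phi> s)) 0"

text \<open>Support of the symmetric initialization (Gaussian entries can take any real value).\<close>
definition sym_init :: "nat \<Rightarrow> ('d::finite) params \<Rightarrow> bool" where
  "sym_init m \<phi>0 = (case \<phi>0 of (c0, U0, W0) \<Rightarrow>
     (\<forall>i < m div 2. c0 i \<in> {-1, 1} \<and> c0 (i + m div 2) = - c0 i \<and>
        U0 (i + m div 2) = U0 i \<and> W0 (i + m div 2) = W0 i))"

definition in_Omega :: "nat \<Rightarrow> real \<Rightarrow> real \<Rightarrow> real \<Rightarrow> ('d::finite) params \<Rightarrow> ('d::finite) params \<Rightarrow> bool" where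
  "in_Omega m \<rho>c \<rho>u \<rho>w \<phi>0 \<phi> = (case \<phi>0 of (c0, U0, W0) \<Rightarrow> case \<phi> of (c, U, W) \<Rightarrow>
     (\<forall>i<m. \<bar>c i - c0 i\<bar> \<le> \<rho>c / sqrt (real m) \<and> norm (U i - U0 i) \<le> \<rho>u / sqrt (real m)
        \<and> norm (W i - W0 i) \<le> \<rho>w / sqrt (real m)))"

definition event_U :: "nat \<Rightarrow> real \<Rightarrow> (nat \<Rightarrow> real^('d::finite)) \<Rightarrow> bool" where
  "event_U m \<delta> U0 = (\<forall>i<m. norm (U0 i) \<le> sqrt (real CARD('d)) + sqrt (2 * ln (real m / (2 * \<delta>))))"

definition B_U :: "('d::finite) itself \<Rightarrow> nat \<Rightarrow> real \<Rightarrow> real \<Rightarrow> real" where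
  "B_U _ m \<delta> \<rho>u = sqrt (real CARD('d)) + sqrt (2 * ln (real m / (2 * \<delta>))) + \<rho>u / sqrt (real m)"

definition L1 :: "('d::finite) itself \<Rightarrow> real \<Rightarrow> nat \<Rightarrow> real \<Rightarrow> real \<Rightarrow> real" where
  "L1 D \<sigma>1 m \<delta> \<rho>u = \<sigma>1 * sqrt (1 + (B_U D m \<delta> \<rho>u)\<^sup>2)"

definition L2 :: "('d::finite) itself \<Rightarrow> real \<Rightarrow> real \<Rightarrow> nat \<Rightarrow> real \<Rightarrow> real \<Rightarrow> real" where
  "L2 D \<sigma>1 \<sigma>2 m \<delta> \<rho>u = \<sigma>2 * (1 + (B_U D m \<delta> \<rho>u)\<^sup>2) + 8 * \<sigma>1 * sqrt (1 + (B_U D m \<delta> \<rho>u)\<^sup>2)"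

end

theory Submission
  imports Defs "HOL-Analysis.Analysis"
begin


lemma mv_comp: "(A *v x) $ i = inner (A $ i) (x::real^'n)"
  by (simp add: matrix_vector_mult_def inner_vec_def mult.commute)
lemma norm_mv: fixes A :: "real^'n^'m" shows "norm (A *v x) \<le> norm A * norm x"
proof -
  have "(norm (A *v x))^2 = (\<Sum>i\<in>UNIV. (inner (A$i) x)^2)"
    by (simp add: norm_vec_def L2_set_def mv_comp sum_nonneg)
  also have "\<dots> \<le> (\<Sum>i\<in>UNIV. (norm (A$i))^2 * (norm x)^2)"
    apply (rule sum_mono)
    by (metis Cauchy_Schwarz_ineq2 abs_ge_zero power2_abs power_mono power_mult_distrib)
  also have "\<dots> = (norm A * norm x)^2"
    by (simp add: sum_distrib_right[symmetric] power_mult_distrib norm_vec_def L2_set_def sum_nonneg)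
  finally show ?thesis
    by (meson norm_ge_zero power2_le_imp_le zero_le_mult_iff)
qed


definition ex :: "('t::finite \<Rightarrow> real) \<Rightarrow> ('t \<Rightarrow> real) \<Rightarrow> real" where
  "ex P f = (\<Sum>t\<in>UNIV. P t * f t) / (\<Sum>t\<in>UNIV. P t)"

lemma sumP_pos: "(\<And>t. P t > (0::real)) \<Longrightarrow> (\<Sum>t\<in>(UNIV::'t::finite set). P t) > 0"
  by (simp add: sum_pos)

lemma ex_mono: assumes "\<And>t. P t > 0" "\<And>t. f t \<le> g t" shows "ex P f \<le> ex P g"
proof -
  have "(\<Sum>t\<in>UNIV. P t * f t) \<le> (\<Sum>t\<in>UNIV. P t * g t)"
    by (rule sum_mono) (simp add: assms less_imp_le mult_left_mono)
  then show ?thesis unfolding ex_def using sumP_pos[of P] assms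
    by (simp add: divide_right_mono)
qed

lemma ex_const: assumes "\<And>t. P t > 0" shows "ex P (\<lambda>t. c) = c"
  unfolding ex_def using sumP_pos[of P] assms by (simp add: sum_distrib_right[symmetric])

lemma ex_lin: "ex P (\<lambda>t. a * f t + b * g t) = a * ex P f + b * ex P g"
  unfolding ex_def by (simp add: algebra_simps sum.distrib sum_distrib_left add_divide_distrib)

lemma ex_diff: "ex P (\<lambda>t. f t - g t) = ex P f - ex P g"
  unfolding ex_def by (simp add: algebra_simps sum_subtractf diff_divide_distrib)

lemma ex_cmult: "ex P (\<lambda>t. a * f t) = a * ex P f"
  unfolding ex_def by (simp add: algebra_simps sum_distrib_left)

lemma ex_abs: assumes "\<And>t. P t > 0" "\<And>t. \<bar>f t\<bar> \<le> M" shows "\<bar>ex P f\<bar> \<le> M"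
proof -
  have "ex P f \<le> ex P (\<lambda>t. M)" by (rule ex_mono) (use assms abs_le_D1 in auto)
  moreover have "ex P (\<lambda>t. -M) \<le> ex P f" by (rule ex_mono) (use assms in \<open>auto intro: abs_le_D2[THEN iffD1[OF minus_le_iff]]\<close>)
  ultimately show ?thesis using ex_const[of P] assms by (simp add: abs_le_iff)
qed

lemma ex_cov: assumes P: "\<And>t. P t > 0" and e: "\<And>t. \<bar>e t\<bar> \<le> w" and y: "\<And>t. \<bar>y t\<bar> \<le> B"
  and w: "w > 0" and B: "B > 0"
  shows "\<bar>ex P (\<lambda>t. e t * y t) - ex P e * ex P y\<bar> \<le> w * B"
proof -
  define eb where "eb = ex P e"
  have 1: "ex P (\<lambda>t. e t * y t) - ex P e * ex P y = ex P (\<lambda>t. (e t - eb) * y t)"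
    using ex_diff[of P "\<lambda>t. e t * y t" "\<lambda>t. eb * y t"] ex_cmult[of P eb y]
    by (simp add: eb_def algebra_simps)
  define k where "k = B / w"
  have k: "k > 0" using w B by (simp add: k_def)
  have pt: "\<bar>(e t - eb) * y t\<bar> \<le> (k * (e t - eb)^2 + (y t)^2 / k) / 2" for t
  proof -
    define a where "a = \<bar>e t - eb\<bar>"
    define b where "b = \<bar>y t\<bar>"
    have "0 \<le> (k * a - b)^2 / k" using k by simp
    also have "(k * a - b)^2 / k = k * a^2 - 2 * (a * b) + b^2 / k" using k
      by (simp add: power2_eq_square field_simps)
    finally have "a * b \<le> (k * a^2 + b^2 / k) / 2" by simp
    moreover have "\<bar>(e t - eb) * y t\<bar> = a * b" by (simp add: a_def b_def abs_mult)
    moreover have "a^2 = (e t - eb)^2" "b^2 = (y t)^2" by (simp_all add: a_def b_def)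
    ultimately show ?thesis by simp
  qed
  have 2: "\<bar>ex P (\<lambda>t. (e t - eb) * y t)\<bar> \<le> ex P (\<lambda>t. (k * (e t - eb)^2 + (y t)^2 / k) / 2)"
  proof -
    have "ex P (\<lambda>t. (e t - eb) * y t) \<le> ex P (\<lambda>t. (k * (e t - eb)^2 + (y t)^2 / k) / 2)"
      by (rule ex_mono[OF P], rule abs_le_D1[OF pt])
    moreover have "ex P (\<lambda>t. - ((k * (e t - eb)^2 + (y t)^2 / k) / 2)) \<le> ex P (\<lambda>t. (e t - eb) * y t)"
      by (rule ex_mono[OF P]) (use abs_le_D2[OF pt] in \<open>simp only: minus_le_iff\<close>)
    moreover have "ex P (\<lambda>t. - ((k * (e t - eb)^2 + (y t)^2 / k) / 2)) = - ex P (\<lambda>t. (k * (e t - eb)^2 + (y t)^2 / k) / 2)"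
      using ex_cmult[of P "-1" "\<lambda>t. (k * (e t - eb)^2 + (y t)^2 / k) / 2"] by (simp only: mult_minus1)
    ultimately show ?thesis by linarith
  qed
  have 3: "ex P (\<lambda>t. (k * (e t - eb)^2 + (y t)^2 / k) / 2) = (k/2) * ex P (\<lambda>t. (e t - eb)^2) + (1/(2*k)) * ex P (\<lambda>t. (y t)^2)"
    using ex_lin[of P "k/2" "\<lambda>t. (e t - eb)^2" "1/(2*k)" "\<lambda>t. (y t)^2"]
    by (simp add: field_simps)
  have 4: "ex P (\<lambda>t. (e t - eb)^2) \<le> w^2"
  proof -
    have "ex P (\<lambda>t. (e t - eb)^2) = ex P (\<lambda>t. (e t)^2 + (-2*eb) * e t) + eb^2"
    proof -
      have "ex P (\<lambda>t. (e t - eb)^2) = ex P (\<lambda>t. ((e t)^2 + (-2*eb) * e t) + eb^2)"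
        by (simp add: power2_eq_square algebra_simps)
      also have "\<dots> = ex P (\<lambda>t. 1 * ((e t)^2 + (-2*eb) * e t) + eb^2 * 1)" by simp
      also have "\<dots> = ex P (\<lambda>t. (e t)^2 + (-2*eb) * e t) + eb^2"
        using ex_lin[of P 1 "\<lambda>t. (e t)^2 + (-2*eb) * e t" "eb^2" "\<lambda>t. 1"] ex_const[of P 1] P by simp
      finally show ?thesis .
    qed
    also have "ex P (\<lambda>t. (e t)^2 + (-2*eb) * e t) = ex P (\<lambda>t. (e t)^2) - 2 * eb^2"
      using ex_lin[of P 1 "\<lambda>t. (e t)^2" "-2*eb" e] by (simp add: eb_def power2_eq_square)
    finally have "ex P (\<lambda>t. (e t - eb)^2) = ex P (\<lambda>t. (e t)^2) - eb^2" by simp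
    moreover have "ex P (\<lambda>t. (e t)^2) \<le> w^2"
    proof -
      have "\<bar>(e t)^2\<bar> \<le> w^2" for t
        using power_mono[OF e[of t] abs_ge_zero, of 2] by simp
      then show ?thesis using ex_abs[OF P, of "\<lambda>t. (e t)^2" "w^2"] by (simp add: abs_le_iff)
    qed
    ultimately show ?thesis by (smt (verit) zero_le_power2)
  qed
  have 5: "ex P (\<lambda>t. (y t)^2) \<le> B^2"
  proof -
    have "\<bar>(y t)^2\<bar> \<le> B^2" for t
      using power_mono[OF y[of t] abs_ge_zero, of 2] by simp
    then show ?thesis using ex_abs[OF P, of "\<lambda>t. (y t)^2" "B^2"] by (simp add: abs_le_iff)
  qed
  have "(k/2) * ex P (\<lambda>t. (e t - eb)^2) + (1/(2*k)) * ex P (\<lambda>t. (y t)^2) \<le> (k/2) * w^2 + (1/(2*k)) * B^2"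
    using 4 5 k by (intro add_mono mult_left_mono) auto
  also have "\<dots> = w * B" using w B by (simp add: k_def field_simps power2_eq_square)
  finally show ?thesis using 1 2 3 by linarith
qed


lemma abs_bound5:
  fixes a b c d g :: real
  assumes "\<bar>a\<bar> \<le> a0" "\<bar>b\<bar> \<le> b0" "\<bar>c\<bar> \<le> c0" "\<bar>d\<bar> \<le> d0" "\<bar>g\<bar> \<le> g0"
  shows "\<bar>a - 2 * b * c - d * g + 2 * d * c^2\<bar> \<le> a0 + 2 * b0 * c0 + d0 * g0 + 2 * d0 * c0^2"
proof -
  have "\<bar>b * c\<bar> \<le> b0 * c0" unfolding abs_mult using assms by (intro mult_mono) auto
  moreover have "\<bar>d * g\<bar> \<le> d0 * g0" unfolding abs_mult using assms by (intro mult_mono) auto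
  moreover have "\<bar>c^2\<bar> \<le> c0^2" using power_mono[OF assms(3) abs_ge_zero, of 2] by simp
  moreover have "\<bar>d * c^2\<bar> \<le> d0 * c0^2" unfolding abs_mult
    using assms(4) \<open>\<bar>c^2\<bar> \<le> c0^2\<close> by (intro mult_mono) auto
  ultimately show ?thesis using assms(1) by (simp only: abs_le_iff) linarith
qed

context
  fixes \<alpha> e y0 dy :: "'t::finite \<Rightarrow> real"
begin

definition "Pw s t = exp (\<alpha> t + s * e t)"
definition "yy s t = y0 t + s * dy t"
definition "E0 s = (\<Sum>t\<in>UNIV. Pw s t)"
definition "E1 s = (\<Sum>t\<in>UNIV. Pw s t * e t)"
definition "E2 s = (\<Sum>t\<in>UNIV. Pw s t * (e t)^2)"
definition "N0 s = (\<Sum>t\<in>UNIV. Pw s t * yy s t)"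
definition "N1 s = (\<Sum>t\<in>UNIV. Pw s t * (e t * yy s t + dy t))"
definition "N2 s = (\<Sum>t\<in>UNIV. Pw s t * ((e t)^2 * yy s t + 2 * e t * dy t))"

lemma dPw: "((\<lambda>s. Pw s t) has_real_derivative Pw s t * e t) (at s)"
  unfolding Pw_def by (auto intro!: derivative_eq_intros)

lemma dE0: "(E0 has_real_derivative E1 s) (at s)"
  unfolding E0_def[abs_def] E1_def by (auto intro!: derivative_eq_intros dPw)

lemma dE1: "(E1 has_real_derivative E2 s) (at s)"
  unfolding E1_def[abs_def] E2_def by (auto intro!: derivative_eq_intros dPw simp: power2_eq_square mult.assoc)

lemma dN0: "(N0 has_real_derivative N1 s) (at s)"
  unfolding N0_def[abs_def] N1_def yy_def by (auto intro!: derivative_eq_intros dPw simp: algebra_simps)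

lemma dN1: "(N1 has_real_derivative N2 s) (at s)"
  unfolding N1_def[abs_def] N2_def yy_def by (auto intro!: derivative_eq_intros dPw simp: algebra_simps power2_eq_square)

lemma E0_pos: "E0 s > 0"
  unfolding E0_def Pw_def by (simp add: sum_pos)

definition "A s = N0 s / E0 s"
definition "A1 s = N1 s / E0 s - N0 s * E1 s / (E0 s)^2"
definition "A2 s = N2 s / E0 s - 2 * N1 s * E1 s / (E0 s)^2 - N0 s * E2 s / (E0 s)^2 + 2 * N0 s * (E1 s)^2 / (E0 s)^3"

lemma dA: "(A has_real_derivative A1 s) (at s)"
  unfolding A_def[abs_def] A1_def
  using E0_pos[of s]
  by (auto intro!: derivative_eq_intros dE0 dN0 simp: field_simps power2_eq_square)

lemma dA1: "(A1 has_real_derivative A2 s) (at s)"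
  unfolding A1_def[abs_def] A2_def
  using E0_pos[of s]
  by (auto intro!: derivative_eq_intros dE0 dN0 dE1 dN1 simp: field_simps power2_eq_square power3_eq_cube)

lemma ex_forms:
  "N0 s / E0 s = ex (Pw s) (yy s)" "E1 s / E0 s = ex (Pw s) e" "E2 s / E0 s = ex (Pw s) (\<lambda>t. (e t)^2)"
  "N1 s / E0 s = ex (Pw s) (\<lambda>t. e t * yy s t + dy t)"
  "N2 s / E0 s = ex (Pw s) (\<lambda>t. (e t)^2 * yy s t + 2 * e t * dy t)"
  by (simp_all add: ex_def N0_def E0_def E1_def E2_def N1_def N2_def)

lemma A1_ex: "A1 s = ex (Pw s) (\<lambda>t. e t * yy s t + dy t) - ex (Pw s) (yy s) * ex (Pw s) e"
proof -
  have "A1 s = N1 s / E0 s - (N0 s / E0 s) * (E1 s / E0 s)"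
    unfolding A1_def by (simp add: power2_eq_square)
  then show ?thesis by (simp add: ex_forms)
qed

lemma A2_ex: "A2 s = ex (Pw s) (\<lambda>t. (e t)^2 * yy s t + 2 * e t * dy t)
   - 2 * ex (Pw s) (\<lambda>t. e t * yy s t + dy t) * ex (Pw s) e
   - ex (Pw s) (yy s) * ex (Pw s) (\<lambda>t. (e t)^2) + 2 * ex (Pw s) (yy s) * (ex (Pw s) e)^2"
proof -
  have "A2 s = N2 s / E0 s - 2 * (N1 s / E0 s) * (E1 s / E0 s) - (N0 s / E0 s) * (E2 s / E0 s)
      + 2 * (N0 s / E0 s) * (E1 s / E0 s)^2"
    unfolding A2_def by (simp add: power2_eq_square power3_eq_cube)
  then show ?thesis by (simp add: ex_forms)
qed

lemma Pw_pos: "Pw s t > 0" by (simp add: Pw_def)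

lemma A_bounds:
  assumes e: "\<And>t. \<bar>e t\<bar> \<le> w" and dy: "\<And>t. \<bar>dy t\<bar> \<le> u" and y: "\<And>t. \<bar>yy s t\<bar> \<le> B"
    and w: "w > 0" and B: "B > 0"
  shows "\<bar>A1 s\<bar> \<le> u + B * w" "\<bar>A2 s\<bar> \<le> 6 * B * w^2 + 4 * w * u"
proof -
  let ?P = "Pw s"
  have P: "\<And>t. ?P t > 0" by (rule Pw_pos)
  have u: "u \<ge> 0" using dy[of undefined] by linarith
  have f1: "ex ?P (\<lambda>t. e t * yy s t + dy t) = ex ?P (\<lambda>t. e t * yy s t) + ex ?P dy"
    using ex_lin[of ?P 1 "\<lambda>t. e t * yy s t" 1 dy] by simp
  have cov: "\<bar>ex ?P (\<lambda>t. e t * yy s t) - ex ?P e * ex ?P (yy s)\<bar> \<le> w * B"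
    by (rule ex_cov[OF P e y w B])
  have bdy: "\<bar>ex ?P dy\<bar> \<le> u" by (rule ex_abs[OF P dy])
  show "\<bar>A1 s\<bar> \<le> u + B * w"
    unfolding A1_ex f1 using cov bdy by (simp add: abs_le_iff algebra_simps)
  have be: "\<bar>ex ?P e\<bar> \<le> w" by (rule ex_abs[OF P e])
  have by': "\<bar>ex ?P (yy s)\<bar> \<le> B" by (rule ex_abs[OF P y])
  have e2pt: "\<bar>(e t)^2\<bar> \<le> w^2" for t
    using power_mono[OF e[of t] abs_ge_zero, of 2] by simp
  have be2: "\<bar>ex ?P (\<lambda>t. (e t)^2)\<bar> \<le> w^2" by (rule ex_abs[OF P e2pt])
  have f1pt: "\<bar>e t * yy s t + dy t\<bar> \<le> w * B + u" for t
  proof -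
    have "\<bar>e t * yy s t\<bar> \<le> w * B" unfolding abs_mult
      using e[of t] y[of t] by (intro mult_mono) auto
    then show ?thesis using dy[of t] by (simp add: abs_le_iff)
  qed
  have bf1: "\<bar>ex ?P (\<lambda>t. e t * yy s t + dy t)\<bar> \<le> w * B + u" by (rule ex_abs[OF P f1pt])
  have f2pt: "\<bar>(e t)^2 * yy s t + 2 * e t * dy t\<bar> \<le> w^2 * B + 2 * w * u" for t
  proof -
    have "\<bar>(e t)^2 * yy s t\<bar> \<le> w^2 * B" unfolding abs_mult
      using e2pt[of t] y[of t] by (intro mult_mono) auto
    moreover have "\<bar>2 * e t * dy t\<bar> \<le> 2 * w * u" unfolding abs_mult
      using e[of t] dy[of t] by (auto intro!: mult_mono)
    ultimately show ?thesis by (simp only: abs_le_iff) linarith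
  qed
  have bf2: "\<bar>ex ?P (\<lambda>t. (e t)^2 * yy s t + 2 * e t * dy t)\<bar> \<le> w^2 * B + 2 * w * u"
    by (rule ex_abs[OF P f2pt])
  show "\<bar>A2 s\<bar> \<le> 6 * B * w^2 + 4 * w * u"
    unfolding A2_ex
    using abs_bound5[OF bf2 bf1 be by' be2] w B u
    by (simp add: algebra_simps power2_eq_square)
qed

end


lemma remainder_bound:
  fixes \<sigma> \<sigma>' \<sigma>'' Af Af1 Af2 :: "real \<Rightarrow> real"
  assumes d1: "\<And>x. (\<sigma> has_real_derivative \<sigma>' x) (at x)"
    and d2: "\<And>x. (\<sigma>' has_real_derivative \<sigma>'' x) (at x)"
    and b1: "\<And>x. \<bar>\<sigma>' x\<bar> \<le> \<sigma>1" and b2: "\<And>x. \<bar>\<sigma>'' x\<bar> \<le> \<sigma>2"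
    and dA: "\<And>s. (Af has_real_derivative Af1 s) (at s)"
    and dA1: "\<And>s. (Af1 has_real_derivative Af2 s) (at s)"
    and K: "\<And>s. 0 \<le> s \<Longrightarrow> s \<le> 1 \<Longrightarrow> \<bar>Af1 s\<bar> \<le> K1 \<and> \<bar>Af2 s\<bar> \<le> K2"
    and c0: "\<bar>c0\<bar> = 1" and dc: "\<bar>dc\<bar> \<le> D"
  shows "\<bar>(c0 + dc) * \<sigma> (Af 1) - (c0 * \<sigma> (Af 0) + (dc * \<sigma> (Af 0) + c0 * (\<sigma>' (Af 0) * Af1 0)))\<bar>
     \<le> \<sigma>2 * K1^2 + \<sigma>1 * K2 + D * (\<sigma>1 * K1)"
proof -
  define h where "h s = \<sigma> (Af s)" for s
  define h1 where "h1 s = \<sigma>' (Af s) * Af1 s" for s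
  define h2 where "h2 s = \<sigma>'' (Af s) * (Af1 s)^2 + \<sigma>' (Af s) * Af2 s" for s
  have dh: "(h has_real_derivative h1 s) (at s)" for s
    unfolding h_def[abs_def] h1_def
    using DERIV_chain2[OF d1 dA] by (simp add: mult.commute)
  have dh1: "(h1 has_real_derivative h2 s) (at s)" for s
    unfolding h1_def[abs_def] h2_def
    using DERIV_mult[OF DERIV_chain2[OF d2 dA] dA1]
    by (simp add: algebra_simps power2_eq_square)
  obtain x where x: "0 < x" "x < 1" "h 1 - h 0 = (1 - 0) * h1 x"
  proof -
    have "\<exists>z>0. z < 1 \<and> h 1 - h 0 = (1 - 0) * h1 z" by (rule MVT2) (use dh in auto)
    then show ?thesis using that by blast
  qed
  obtain y where y: "0 < y" "y < x" "h1 x - h1 0 = (x - 0) * h2 y"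
  proof -
    have "\<exists>z>0. z < x \<and> h1 x - h1 0 = (x - 0) * h2 z" by (rule MVT2) (use dh1 x in auto)
    then show ?thesis using that by blast
  qed
  have s2: "\<sigma>2 \<ge> 0" using b2[of 0] by linarith
  have s1: "\<sigma>1 \<ge> 0" using b1[of 0] by linarith
  have Ky: "\<bar>Af1 y\<bar> \<le> K1" "\<bar>Af2 y\<bar> \<le> K2" using K[of y] x y by auto
  have Kx: "\<bar>Af1 x\<bar> \<le> K1" using K[of x] x by auto
  have "\<bar>(Af1 y)^2\<bar> \<le> K1^2" using power_mono[OF Ky(1) abs_ge_zero, of 2] by simp
  then have "\<bar>\<sigma>'' (Af y) * (Af1 y)^2\<bar> \<le> \<sigma>2 * K1^2" unfolding abs_mult
    using b2 s2 by (intro mult_mono) auto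
  moreover have "\<bar>\<sigma>' (Af y) * Af2 y\<bar> \<le> \<sigma>1 * K2" unfolding abs_mult
    using b1 Ky s1 by (intro mult_mono) auto
  ultimately have h2b: "\<bar>h2 y\<bar> \<le> \<sigma>2 * K1^2 + \<sigma>1 * K2" unfolding h2_def
    by (simp only: abs_le_iff) linarith
  have h1b: "\<bar>h1 x\<bar> \<le> \<sigma>1 * K1" unfolding h1_def abs_mult
    using b1 Kx s1 by (intro mult_mono) auto
  have eq: "(c0 + dc) * \<sigma> (Af 1) - (c0 * \<sigma> (Af 0) + (dc * \<sigma> (Af 0) + c0 * (\<sigma>' (Af 0) * Af1 0)))
     = c0 * (x * h2 y) + dc * h1 x"
    using x(3) y(3) unfolding h_def h1_def by (simp add: algebra_simps)
  have "\<bar>c0 * (x * h2 y)\<bar> \<le> \<sigma>2 * K1^2 + \<sigma>1 * K2"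
  proof -
    have "\<bar>c0 * (x * h2 y)\<bar> = x * \<bar>h2 y\<bar>" using c0 x by (simp add: abs_mult)
    also have "\<dots> \<le> 1 * \<bar>h2 y\<bar>" using x by (intro mult_right_mono) auto
    finally show ?thesis using h2b by simp
  qed
  moreover have "\<bar>dc * h1 x\<bar> \<le> D * (\<sigma>1 * K1)" unfolding abs_mult
    using dc h1b by (intro mult_mono) auto
  ultimately show ?thesis unfolding eq by (simp only: abs_le_iff) linarith
qed


lemma neuron_rep:
  fixes X :: "real^'d::finite^'t::finite"
  shows "neuron \<sigma> X q (U0 + s *\<^sub>R dU) (W0 + s *\<^sub>R dW) =
    \<sigma> (A (\<lambda>t. X$t \<bullet> (W0 *v q)) (\<lambda>t. X$t \<bullet> (dW *v q)) (\<lambda>t. U0 \<bullet> X$t) (\<lambda>t. dU \<bullet> X$t) s)"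
proof -
  have z: "X$t \<bullet> ((W0 + s *\<^sub>R dW) *v q) = X$t \<bullet> (W0 *v q) + s * (X$t \<bullet> (dW *v q))" for t
    by (simp add: matrix_vector_mult_add_rdistrib scaleR_matrix_vector_assoc[symmetric] inner_add_right)
  have y: "(U0 + s *\<^sub>R dU) \<bullet> X$t = U0 \<bullet> X$t + s * (dU \<bullet> X$t)" for t
    by (simp add: inner_add_left)
  show ?thesis
    unfolding neuron_def attn_def softmax_def A_def N0_def E0_def Pw_def yy_def
    by (simp add: z y inner_sum_right sum_divide_distrib)
qed

lemma final_arith:
  fixes m :: real
  assumes m: "m > 0" and s1: "\<sigma>1 \<ge> 0" and s2: "\<sigma>2 \<ge> 0" and B: "B > 0"
    and r: "\<rho>c > 0" "\<rho>u > 0" "\<rho>w > 0"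
  shows "m * (\<sigma>2 * (\<rho>u / sqrt m + B * (\<rho>w / sqrt m))^2
        + \<sigma>1 * (6 * B * (\<rho>w / sqrt m)^2 + 4 * (\<rho>w / sqrt m) * (\<rho>u / sqrt m))
        + \<rho>c / sqrt m * (\<sigma>1 * (\<rho>u / sqrt m + B * (\<rho>w / sqrt m))))
     \<le> \<sigma>1 * sqrt (1 + B^2) * \<rho>c * sqrt (\<rho>w^2 + \<rho>u^2)
       + (\<sigma>2 * (1 + B^2) + 8 * \<sigma>1 * sqrt (1 + B^2)) * (\<rho>w^2 + \<rho>u^2)"
proof -
  have sm: "sqrt m * sqrt m = m" using m by simp
  have sm0: "sqrt m > 0" using m by simp
  have e1: "m * (\<sigma>2 * (\<rho>u / sqrt m + B * (\<rho>w / sqrt m))^2) = \<sigma>2 * (\<rho>u + B * \<rho>w)^2"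
    using sm sm0 by (simp add: field_simps power2_eq_square)
  have e2: "m * (\<sigma>1 * (6 * B * (\<rho>w / sqrt m)^2 + 4 * (\<rho>w / sqrt m) * (\<rho>u / sqrt m)))
      = \<sigma>1 * (6 * B * \<rho>w^2 + 4 * \<rho>w * \<rho>u)"
    using sm sm0 by (simp add: field_simps power2_eq_square)
  have e3: "m * (\<rho>c / sqrt m * (\<sigma>1 * (\<rho>u / sqrt m + B * (\<rho>w / sqrt m)))) = \<rho>c * \<sigma>1 * (\<rho>u + B * \<rho>w)"
    using sm sm0 by (simp add: field_simps power2_eq_square)
  define S where "S = \<rho>w^2 + \<rho>u^2"
  have CS: "(\<rho>u + B * \<rho>w)^2 \<le> (1 + B^2) * S"
  proof -
    have "0 \<le> (B * \<rho>u - \<rho>w)^2" by simp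
    then show ?thesis unfolding S_def by (simp add: power2_eq_square algebra_simps)
  qed
  have CS': "\<rho>u + B * \<rho>w \<le> sqrt (1 + B^2) * sqrt S"
    using real_sqrt_le_mono[OF CS] r B by (simp add: real_sqrt_mult)
  have sB: "B \<le> sqrt (1 + B^2)" "1 \<le> sqrt (1 + B^2)"
    using B by (auto intro: real_le_rsqrt)
  have "\<sigma>2 * (\<rho>u + B * \<rho>w)^2 \<le> \<sigma>2 * ((1 + B^2) * S)" using CS s2 by (rule mult_left_mono)
  moreover have "6 * B * \<rho>w^2 + 4 * \<rho>w * \<rho>u \<le> 8 * sqrt (1 + B^2) * S"
  proof -
    have "4 * \<rho>w * \<rho>u \<le> 2 * S" unfolding S_def using sum_squares_bound[of "\<rho>w" "\<rho>u"] by (simp add: algebra_simps power2_eq_square)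
    also have "\<dots> \<le> 2 * sqrt (1 + B^2) * S"
    proof -
      have S0: "0 \<le> S" unfolding S_def by simp
      show ?thesis using mult_right_mono[OF sB(2) S0] by linarith
    qed
    finally have a: "4 * \<rho>w * \<rho>u \<le> 2 * sqrt (1 + B^2) * S" .
    have "6 * B * \<rho>w^2 \<le> 6 * sqrt (1 + B^2) * \<rho>w^2" using sB by (simp add: mult_right_mono)
    also have "\<dots> \<le> 6 * sqrt (1 + B^2) * S" unfolding S_def by (intro mult_left_mono) auto
    finally show ?thesis using a by linarith
  qed
  then have "\<sigma>1 * (6 * B * \<rho>w^2 + 4 * \<rho>w * \<rho>u) \<le> \<sigma>1 * (8 * sqrt (1 + B^2) * S)"
    using s1 by (rule mult_left_mono)
  moreover have "\<rho>c * \<sigma>1 * (\<rho>u + B * \<rho>w) \<le> \<rho>c * \<sigma>1 * (sqrt (1 + B^2) * sqrt S)"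
    using CS' s1 r by (intro mult_left_mono) auto
  moreover have split: "\<And>a b c. m * (a + b + c) = m * a + m * b + m * c" by (simp add: algebra_simps)
  moreover have "\<sigma>1 * sqrt (1 + B^2) * \<rho>c * sqrt S + (\<sigma>2 * (1 + B^2) + 8 * \<sigma>1 * sqrt (1 + B^2)) * S
     = \<sigma>2 * ((1 + B^2) * S) + \<sigma>1 * (8 * sqrt (1 + B^2) * S) + \<rho>c * \<sigma>1 * (sqrt (1 + B^2) * sqrt S)"
    by (simp add: algebra_simps)
  ultimately show ?thesis unfolding split e1 e2 e3 S_def[symmetric]
    by linarith
qed



theorem lemma3:
  fixes \<sigma> \<sigma>' \<sigma>'' :: "real \<Rightarrow> real" and \<sigma>0 \<sigma>1 \<sigma>2 :: real
    and Q :: "real^'d^'t::finite \<Rightarrow> real^'d"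
    and m n :: nat and \<delta> \<rho>c \<rho>u \<rho>w :: real
    and Xs :: "nat \<Rightarrow> real^'d^'t"
    and \<phi>0 \<phi> :: "'d params"
  assumes d1: "\<And>x. (\<sigma> has_real_derivative \<sigma>' x) (at x)"
    and d2: "\<And>x. (\<sigma>' has_real_derivative \<sigma>'' x) (at x)"
    and b0: "\<And>x. \<bar>\<sigma> x\<bar> \<le> \<sigma>0" and b1: "\<And>x. \<bar>\<sigma>' x\<bar> \<le> \<sigma>1" and b2: "\<And>x. \<bar>\<sigma>'' x\<bar> \<le> \<sigma>2"
    and Qb: "\<And>X. in_dom X \<Longrightarrow> norm (Q X) \<le> 1"
    and m_even: "even m" and m_pos: "m > 0"
    and \<delta>: "0 < \<delta>" "\<delta> < 1"
    and \<rho>: "0 < \<rho>c" "0 < \<rho>u" "0 < \<rho>w"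
    and Xs: "\<And>j. j < n \<Longrightarrow> in_dom (Xs j)"
    and init: "sym_init m \<phi>0"
    and event: "event_U m \<delta> (fst (snd \<phi>0))"
    and Om: "in_Omega m \<rho>c \<rho>u \<rho>w \<phi>0 \<phi>"
  shows "\<forall>j<n. \<bar>net \<sigma> Q m (Xs j) \<phi> - net_lin \<sigma> Q m (Xs j) \<phi>0 \<phi>\<bar>
     \<le> (1 / sqrt (real m)) * (L1 TYPE('d) \<sigma>1 m \<delta> \<rho>u * \<rho>c * sqrt (\<rho>w\<^sup>2 + \<rho>u\<^sup>2)
         + L2 TYPE('d) \<sigma>1 \<sigma>2 m \<delta> \<rho>u * (\<rho>w\<^sup>2 + \<rho>u\<^sup>2))"
proof (intro allI impI)
  fix j assume j: "j < n"
  define X where "X = Xs j"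
  have X: "in_dom X" using Xs j X_def by simp
  define q where "q = Q X"
  have q: "norm q \<le> 1" using Qb X q_def by simp
  have Xt: "norm (X $ t) \<le> 1" for t using X by (simp add: in_dom_def)
  obtain c0 U0 W0 where p0: "\<phi>0 = (c0, U0, W0)" by (cases \<phi>0) auto
  obtain c U W where p1: "\<phi> = (c, U, W)" by (cases \<phi>) auto
  define dc where "dc i = c i - c0 i" for i
  define dU where "dU i = U i - U0 i" for i
  define dW where "dW i = W i - W0 i" for i
  define al where "al i t = X$t \<bullet> (W0 i *v q)" for i t
  define ee where "ee i t = X$t \<bullet> (dW i *v q)" for i t
  define y0 where "y0 i t = U0 i \<bullet> X$t" for i t
  define dy where "dy i t = dU i \<bullet> X$t" for i t
  define Ai where "Ai i = A (al i) (ee i) (y0 i) (dy i)" for i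
  define Ai1 where "Ai1 i = A1 (al i) (ee i) (y0 i) (dy i)" for i
  define Ai2 where "Ai2 i = A2 (al i) (ee i) (y0 i) (dy i)" for i
  define g where "g i s = (c0 i + s * dc i) * \<sigma> (Ai i s)" for i s
  define g1 where "g1 i s = dc i * \<sigma> (Ai i s) + (c0 i + s * dc i) * (\<sigma>' (Ai i s) * Ai1 i s)" for i s
  have rep: "net \<sigma> Q m X (param_line \<phi>0 \<phi> s) = (1 / sqrt (real m)) * (\<Sum>i<m. g i s)" for s
    unfolding net_def param_line_def p0 p1 g_def Ai_def al_def ee_def y0_def dy_def
    by (simp add: neuron_rep q_def dc_def dU_def dW_def)
  have dAi: "(Ai i has_real_derivative Ai1 i s) (at s)" for i s
    unfolding Ai_def Ai1_def by (rule dA)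
  have dAi1: "(Ai1 i has_real_derivative Ai2 i s) (at s)" for i s
    unfolding Ai2_def Ai1_def by (rule dA1)
  have dg: "(g i has_real_derivative g1 i s) (at s)" for i s
  proof -
    have "((\<lambda>s. c0 i + s * dc i) has_real_derivative dc i) (at s)"
      by (auto intro!: derivative_eq_intros)
    from DERIV_mult[OF this DERIV_chain2[OF d1 dAi]]
    show ?thesis unfolding g_def[abs_def] g1_def by (simp add: algebra_simps)
  qed
  have dF: "((\<lambda>s. net \<sigma> Q m X (param_line \<phi>0 \<phi> s)) has_real_derivative
       (1 / sqrt (real m)) * (\<Sum>i<m. g1 i 0)) (at 0)"
    unfolding rep by (intro DERIV_cmult DERIV_sum dg)
  have lin: "net_lin \<sigma> Q m X \<phi>0 \<phi> = (1 / sqrt (real m)) * (\<Sum>i<m. g i 0) + (1 / sqrt (real m)) * (\<Sum>i<m. g1 i 0)"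
  proof -
    have "param_line \<phi>0 \<phi> 0 = \<phi>0" unfolding param_line_def p0 p1 by simp
    then have "net \<sigma> Q m X \<phi>0 = (1 / sqrt (real m)) * (\<Sum>i<m. g i 0)" using rep[of 0] by simp
    then show ?thesis unfolding net_lin_def using DERIV_imp_deriv[OF dF] by simp
  qed
  have n1: "net \<sigma> Q m X \<phi> = (1 / sqrt (real m)) * (\<Sum>i<m. g i 1)"
  proof -
    have "param_line \<phi>0 \<phi> 1 = \<phi>" unfolding param_line_def p0 p1 by simp
    then show ?thesis using rep[of 1] by simp
  qed
  have diff: "net \<sigma> Q m X \<phi> - net_lin \<sigma> Q m X \<phi>0 \<phi> = (1 / sqrt (real m)) * (\<Sum>i<m. g i 1 - (g i 0 + g1 i 0))"
    unfolding n1 lin by (simp add: sum_subtractf sum.distrib algebra_simps)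
  define B where "B = B_U TYPE('d) m \<delta> \<rho>u"
  define u where "u = \<rho>u / sqrt (real m)"
  define w where "w = \<rho>w / sqrt (real m)"
  define D where "D = \<rho>c / sqrt (real m)"
  have sm: "sqrt (real m) > 0" using m_pos by simp
  have w0: "w > 0" unfolding w_def using sm \<rho> by simp
  have u0: "u > 0" unfolding u_def using sm \<rho> by simp
  have U0b: "norm (U0 i) \<le> sqrt (real CARD('d)) + sqrt (2 * ln (real m / (2 * \<delta>)))" if "i < m" for i
    using event that p0 unfolding event_U_def by simp
  have Omi: "\<bar>dc i\<bar> \<le> D \<and> norm (dU i) \<le> u \<and> norm (dW i) \<le> w" if "i < m" for i
    using Om that unfolding in_Omega_def p0 p1 dc_def dU_def dW_def D_def u_def w_def by simp
  have B0: "B > 0"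
  proof -
    have "0 \<le> norm (U0 0)" by simp
    moreover have "\<rho>u / sqrt (real m) > 0" using sm \<rho> by simp
    ultimately show ?thesis using U0b[of 0] m_pos unfolding B_def B_U_def by linarith
  qed
  have c0abs: "\<bar>c0 i\<bar> = 1" if "i < m" for i
  proof -
    have ini: "\<forall>i < m div 2. c0 i \<in> {-1, 1} \<and> c0 (i + m div 2) = - c0 i"
      using init unfolding sym_init_def p0 by simp
    have mm: "m = 2 * (m div 2)" using m_even by simp
    show ?thesis
    proof (cases "i < m div 2")
      case True then show ?thesis using ini by auto
    next
      case False
      define k where "k = i - m div 2"
      have k: "i = k + m div 2" "k < m div 2" using False that mm unfolding k_def by linarith+
      then show ?thesis using ini by auto
    qed
  qed
  define R where "R = \<sigma>2 * (u + B * w)^2 + \<sigma>1 * (6 * B * w^2 + 4 * w * u) + D * (\<sigma>1 * (u + B * w))"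
  have per: "\<bar>g i 1 - (g i 0 + g1 i 0)\<bar> \<le> R" if i: "i < m" for i
  proof -
    have eb: "\<bar>ee i t\<bar> \<le> w" for t
    proof -
      have "\<bar>ee i t\<bar> \<le> norm (X $ t) * norm (dW i *v q)" unfolding ee_def by (rule Cauchy_Schwarz_ineq2)
      also have "\<dots> \<le> 1 * (norm (dW i) * norm q)"
        using Xt norm_mv[of "dW i" q] by (intro mult_mono) auto
      also have "\<dots> \<le> w * 1" using mult_mono[of "norm (dW i)" w "norm q" 1] Omi[OF i] q w0 by simp
      finally show ?thesis by simp
    qed
    have dyb: "\<bar>dy i t\<bar> \<le> u" for t
    proof -
      have "\<bar>dy i t\<bar> \<le> norm (dU i) * norm (X $ t)" unfolding dy_def by (rule Cauchy_Schwarz_ineq2)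
      also have "\<dots> \<le> u * 1" using Xt Omi[OF i] u0 by (intro mult_mono) auto
      finally show ?thesis by simp
    qed
    have yb: "\<bar>yy (y0 i) (dy i) s t\<bar> \<le> B" if s: "0 \<le> s" "s \<le> 1" for s t
    proof -
      have "\<bar>y0 i t\<bar> \<le> norm (U0 i) * norm (X $ t)" unfolding y0_def by (rule Cauchy_Schwarz_ineq2)
      also have "\<dots> \<le> norm (U0 i) * 1" using Xt by (intro mult_left_mono) auto
      finally have a: "\<bar>y0 i t\<bar> \<le> sqrt (real CARD('d)) + sqrt (2 * ln (real m / (2 * \<delta>)))"
        using U0b[OF i] by simp
      have "\<bar>s * dy i t\<bar> \<le> 1 * u" unfolding abs_mult using s dyb[of t] by (intro mult_mono) auto
      then show ?thesis using a unfolding yy_def B_def B_U_def u_def by (simp only: abs_le_iff) linarith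
    qed
    have K: "\<bar>Ai1 i s\<bar> \<le> u + B * w \<and> \<bar>Ai2 i s\<bar> \<le> 6 * B * w^2 + 4 * w * u" if "0 \<le> s" "s \<le> 1" for s
      unfolding Ai1_def Ai2_def
      using A_bounds[of "ee i" w "dy i" u "y0 i" s B "al i"] eb dyb yb[OF that] w0 B0 by blast
    have dcb: "\<bar>dc i\<bar> \<le> D" using Omi[OF i] by simp
    from remainder_bound[OF d1 d2 b1 b2 dAi dAi1 K c0abs[OF i] dcb]
    show ?thesis unfolding g_def g1_def R_def by simp
  qed
  have "\<bar>net \<sigma> Q m X \<phi> - net_lin \<sigma> Q m X \<phi>0 \<phi>\<bar> \<le> (1 / sqrt (real m)) * (real m * R)"
  proof -
    have "\<bar>\<Sum>i<m. g i 1 - (g i 0 + g1 i 0)\<bar> \<le> (\<Sum>i<m. \<bar>g i 1 - (g i 0 + g1 i 0)\<bar>)" by (rule sum_abs)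
    also have "\<dots> \<le> (\<Sum>i<m. R)" by (rule sum_mono) (use per in auto)
    finally have "\<bar>\<Sum>i<m. g i 1 - (g i 0 + g1 i 0)\<bar> \<le> real m * R" by simp
    then show ?thesis unfolding diff abs_mult using sm by (simp add: divide_right_mono)
  qed
  also have "\<dots> \<le> (1 / sqrt (real m)) * (L1 TYPE('d) \<sigma>1 m \<delta> \<rho>u * \<rho>c * sqrt (\<rho>w\<^sup>2 + \<rho>u\<^sup>2)
         + L2 TYPE('d) \<sigma>1 \<sigma>2 m \<delta> \<rho>u * (\<rho>w\<^sup>2 + \<rho>u\<^sup>2))"
  proof (rule mult_left_mono)
    have s1: "\<sigma>1 \<ge> 0" using b1[of 0] by linarith
    have s2: "\<sigma>2 \<ge> 0" using b2[of 0] by linarith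
    show "real m * R \<le> L1 TYPE('d) \<sigma>1 m \<delta> \<rho>u * \<rho>c * sqrt (\<rho>w\<^sup>2 + \<rho>u\<^sup>2)
         + L2 TYPE('d) \<sigma>1 \<sigma>2 m \<delta> \<rho>u * (\<rho>w\<^sup>2 + \<rho>u\<^sup>2)"
      using final_arith[of "real m" \<sigma>1 \<sigma>2 B \<rho>c \<rho>u \<rho>w] m_pos s1 s2 B0 \<rho>
      unfolding R_def u_def w_def D_def L1_def L2_def B_def by simp
    show "0 \<le> 1 / sqrt (real m)" by simp
  qed
  finally show "\<bar>net \<sigma> Q m (Xs j) \<phi> - net_lin \<sigma> Q m (Xs j) \<phi>0 \<phi>\<bar>
     \<le> (1 / sqrt (real m)) * (L1 TYPE('d) \<sigma>1 m \<delta> \<rho>u * \<rho>c * sqrt (\<rho>w\<^sup>2 + \<rho>u\<^sup>2)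
         + L2 TYPE('d) \<sigma>1 \<sigma>2 m \<delta> \<rho>u * (\<rho>w\<^sup>2 + \<rho>u\<^sup>2))" unfolding X_def .
qed
end
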